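(* Let $S$ be a $\mathcal{C}$-semigroup with $S\ne\mathcal{C}$ and genus $g$. Then $S$ is symmetric if and only if $2g=\mathcal{F}(S)$.
   Context: An integer cone $\mathcal{C}\subseteq\mathbb{N}^p$ is the set of integer points of a finitely generated rational cone in $\mathbb{Q}_{\ge0}^p$. A $\mathcal{C}$-semigroup is a subset $S\subseteq\mathcal{C}$ containing $0$, closed under addition, with $\mathcal{C}\setminus S$ finite; $\mathcal{H}(S)=\mathcal{C}\setminus S$, $g=g(S)=\#\mathcal{H}(S)$. A monomial order $\preceq$ on $\mathbb{N}^p$ is fixed (total order, compatible with addition, $\mathbf 0\preceq\mathbf c$ for all $\mathbf c$), and $F(S)=\max_\preceq\mathcal{H}(S)$. $\mathrm{PF}(S)=\{\mathbf x\in\mathcal{H}(S)\mid \mathbf x+(S\setminus\{0\})\subseteq S\}$; $S$ is symmetric if $\mathrm{PF}(S)=\{F(S)\}$. $\mathbf x\le_{\mathcal{C}}\mathbf y$ means $\mathbf y-\mathbf x\in\mathcal{C}$; $I_S(\mathbf n)=\{\mathbf s\in S\mid \mathbf s\le_{\mathcal{C}}\mathbf n\}$. The generalized Frobenius number is $\mathcal{F}(S)=\#I_S(F(S))+g(S)$. *)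

theory Defs
  imports Complex_Main "HOL-Library.Function_Algebras"
begin

text \<open>Points of N^p are functions 'n => nat for a finite index type 'n (p = CARD('n)).
  Addition and zero are pointwise (HOL-Library.Function_Algebras).\<close>

definition integer_cone :: "('n::finite \<Rightarrow> nat) set \<Rightarrow> bool" where
  "integer_cone C \<longleftrightarrow>
     (\<exists>G :: ('n \<Rightarrow> rat) set. finite G \<and> (\<forall>g\<in>G. \<forall>i. g i \<ge> 0) \<and>
        C = {x. \<exists>l :: ('n \<Rightarrow> rat) \<Rightarrow> rat. (\<forall>g\<in>G. l g \<ge> 0) \<and>
                    (\<forall>i. of_nat (x i) = (\<Sum>g\<in>G. l g * g i))})"

definition C_semigroup :: "('n::finite \<Rightarrow> nat) set \<Rightarrow> ('n \<Rightarrow> nat) set \<Rightarrow> bool" where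
  "C_semigroup C S \<longleftrightarrow> integer_cone C \<and> S \<subseteq> C \<and> 0 \<in> S \<and>
     (\<forall>a\<in>S. \<forall>b\<in>S. a + b \<in> S) \<and> finite (C - S)"

definition monomial_order :: "(('n::finite \<Rightarrow> nat) \<Rightarrow> ('n \<Rightarrow> nat) \<Rightarrow> bool) \<Rightarrow> bool" where
  "monomial_order le \<longleftrightarrow>
     (\<forall>a. le a a) \<and> (\<forall>a b. le a b \<and> le b a \<longrightarrow> a = b) \<and>
     (\<forall>a b c. le a b \<and> le b c \<longrightarrow> le a c) \<and> (\<forall>a b. le a b \<or> le b a) \<and>
     (\<forall>a b c. le a b \<longrightarrow> le (a + c) (b + c)) \<and> (\<forall>c. le 0 c)"

definition gaps :: "('n \<Rightarrow> nat) set \<Rightarrow> ('n \<Rightarrow> nat) set \<Rightarrow> ('n \<Rightarrow> nat) set" where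
  "gaps C S = C - S"

definition genus :: "('n \<Rightarrow> nat) set \<Rightarrow> ('n \<Rightarrow> nat) set \<Rightarrow> nat" where
  "genus C S = card (gaps C S)"

definition frob :: "(('n \<Rightarrow> nat) \<Rightarrow> ('n \<Rightarrow> nat) \<Rightarrow> bool) \<Rightarrow> ('n \<Rightarrow> nat) set \<Rightarrow> ('n \<Rightarrow> nat) set \<Rightarrow> ('n \<Rightarrow> nat)" where
  "frob le C S = (THE x. x \<in> gaps C S \<and> (\<forall>y\<in>gaps C S. le y x))"

definition pseudo_frob :: "('n \<Rightarrow> nat) set \<Rightarrow> ('n \<Rightarrow> nat) set \<Rightarrow> ('n \<Rightarrow> nat) set" where
  "pseudo_frob C S = {x \<in> gaps C S. \<forall>s\<in>S - {0}. x + s \<in> S}"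

definition symmetric_Csg :: "(('n \<Rightarrow> nat) \<Rightarrow> ('n \<Rightarrow> nat) \<Rightarrow> bool) \<Rightarrow> ('n \<Rightarrow> nat) set \<Rightarrow> ('n \<Rightarrow> nat) set \<Rightarrow> bool" where
  "symmetric_Csg le C S \<longleftrightarrow> pseudo_frob C S = {frob le C S}"

text \<open>x \<le>_C y iff y - x \<in> C (the difference taken in Z^p).\<close>
definition cone_le :: "('n \<Rightarrow> nat) set \<Rightarrow> ('n \<Rightarrow> nat) \<Rightarrow> ('n \<Rightarrow> nat) \<Rightarrow> bool" where
  "cone_le C x y \<longleftrightarrow> (\<exists>c\<in>C. y = x + c)"

definition I_S :: "('n \<Rightarrow> nat) set \<Rightarrow> ('n \<Rightarrow> nat) set \<Rightarrow> ('n \<Rightarrow> nat) \<Rightarrow> ('n \<Rightarrow> nat) set" where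
  "I_S C S n = {s \<in> S. cone_le C s n}"

definition gen_frob :: "(('n \<Rightarrow> nat) \<Rightarrow> ('n \<Rightarrow> nat) \<Rightarrow> bool) \<Rightarrow> ('n \<Rightarrow> nat) set \<Rightarrow> ('n \<Rightarrow> nat) set \<Rightarrow> nat" where
  "gen_frob le C S = card (I_S C S (frob le C S)) + genus C S"

end

theory Submission
  imports Defs
begin

lemma mo_refl: "monomial_order le \<Longrightarrow> le a a" unfolding monomial_order_def by blast
lemma mo_antisym: "monomial_order le \<Longrightarrow> le a b \<Longrightarrow> le b a \<Longrightarrow> a = b" unfolding monomial_order_def by blast
lemma mo_trans: "monomial_order le \<Longrightarrow> le a b \<Longrightarrow> le b c \<Longrightarrow> le a c" unfolding monomial_order_def by blast
lemma mo_total: "monomial_order le \<Longrightarrow> le a b \<or> le b a" unfolding monomial_order_def by blast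
lemma mo_add: "monomial_order le \<Longrightarrow> le a b \<Longrightarrow> le (a + c) (b + c)" unfolding monomial_order_def by blast
lemma mo_zero: "monomial_order le \<Longrightarrow> le 0 c" unfolding monomial_order_def by blast

lemma ex_max:
  assumes mo: "monomial_order le" and "finite A" "A \<noteq> {}"
  shows "\<exists>x\<in>A. \<forall>y\<in>A. le y x"
  using assms(2,3)
proof (induction A rule: finite_ne_induct)
  case (singleton x) then show ?case using mo_refl[OF mo] by auto
next
  case (insert a A)
  then obtain x where x: "x \<in> A" "\<forall>y\<in>A. le y x" by blast
  show ?case
  proof (cases "le a x")
    case True then show ?thesis using x by auto
  next
    case False
    then have "le x a" using mo_total[OF mo] by blast
    have "le a a" using mo_refl[OF mo] .
    have "\<forall>y\<in>insert a A. le y a"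
    proof
      fix y assume "y \<in> insert a A"
      then show "le y a"
      proof
        assume "y = a" then show ?thesis using \<open>le a a\<close> by simp
      next
        assume "y \<in> A" then have "le y x" using x by blast
        then show ?thesis using mo_trans[OF mo _ \<open>le x a\<close>] by blast
      qed
    qed
    then show ?thesis by blast
  qed
qed

lemma cone_add:
  assumes "integer_cone C" "x \<in> C" "y \<in> C" shows "x + y \<in> C"
proof -
  obtain G where G: "finite G" "C = {x. \<exists>l :: ('a \<Rightarrow> rat) \<Rightarrow> rat. (\<forall>g\<in>G. l g \<ge> 0) \<and>
                    (\<forall>i. of_nat (x i) = (\<Sum>g\<in>G. l g * g i))}"
    using assms(1) unfolding integer_cone_def by blast
  obtain l1 where l1: "\<forall>g\<in>G. l1 g \<ge> 0" "\<forall>i. of_nat (x i) = (\<Sum>g\<in>G. l1 g * g i)"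
    using assms(2) G(2) by blast
  obtain l2 where l2: "\<forall>g\<in>G. l2 g \<ge> 0" "\<forall>i. of_nat (y i) = (\<Sum>g\<in>G. l2 g * g i)"
    using assms(3) G(2) by blast
  have h1: "\<forall>g\<in>G. l1 g + l2 g \<ge> 0" using l1 l2 by auto
  have h2: "\<forall>i. of_nat ((x + y) i) = (\<Sum>g\<in>G. (l1 g + l2 g) * g i)"
    using l1(2) l2(2) by (simp add: distrib_right sum.distrib)
  show ?thesis unfolding G(2) mem_Collect_eq
    apply (rule exI[of _ "\<lambda>g. l1 g + l2 g"])
    using h1 h2 by (intro conjI) auto
qed

theorem mainTheorem6:
  fixes C S :: "('n::finite \<Rightarrow> nat) set"
    and le :: "('n \<Rightarrow> nat) \<Rightarrow> ('n \<Rightarrow> nat) \<Rightarrow> bool"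
  assumes "monomial_order le"
    and "C_semigroup C S"
    and "S \<noteq> C"
  shows "symmetric_Csg le C S \<longleftrightarrow> 2 * genus C S = gen_frob le C S"
proof -
  note mo = assms(1)
  have cone: "integer_cone C" and SC: "S \<subseteq> C" and S0: "0 \<in> S"
    and Sadd: "\<forall>a\<in>S. \<forall>b\<in>S. a + b \<in> S" and fin: "finite (gaps C S)"
    using assms(2) by (auto simp: C_semigroup_def gaps_def)
  have ne: "gaps C S \<noteq> {}" using SC assms(3) by (auto simp: gaps_def)
  have antis: "\<And>a b. le a b \<Longrightarrow> le b a \<Longrightarrow> a = b" using mo_antisym[OF mo] by blast
  have le0: "\<And>x s. le x (x + s)"
  proof -
    fix x s :: "'n \<Rightarrow> nat"
    have "le 0 s" using mo_zero[OF mo] .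
    then have "le (0 + x) (s + x)" by (rule mo_add[OF mo])
    then show "le x (x + s)" by (simp add: add.commute)
  qed
  define F where "F = frob le C S"
  obtain x0 where x0: "x0 \<in> gaps C S" "\<forall>y\<in>gaps C S. le y x0"
    using ex_max[OF mo fin ne] by blast
  have "F = x0" unfolding F_def frob_def
  proof (rule the_equality)
    show "x0 \<in> gaps C S \<and> (\<forall>y\<in>gaps C S. le y x0)" using x0 by blast
  next
    fix x assume "x \<in> gaps C S \<and> (\<forall>y\<in>gaps C S. le y x)"
    then show "x = x0" using x0 antis by blast
  qed
  then have Fg: "F \<in> gaps C S" and Fmax: "\<forall>y\<in>gaps C S. le y F" using x0 by auto
  have FPF: "F \<in> pseudo_frob C S"
  proof -
    have "F + s \<in> S" if "s \<in> S - {0}" for s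
    proof (rule ccontr)
      assume "F + s \<notin> S"
      moreover have "F + s \<in> C" using cone_add[OF cone] Fg SC that by (auto simp: gaps_def)
      ultimately have "le (F + s) F" using Fmax by (auto simp: gaps_def)
      then have "F + s = F" using antis le0 by blast
      then have "s = 0" by (metis add_cancel_left_right)
      then show False using that by simp
    qed
    then show ?thesis using Fg by (auto simp: pseudo_frob_def)
  qed
  define I where "I = I_S C S F"
  define \<phi> where "\<phi> = (\<lambda>s::'n\<Rightarrow>nat. F - s)"
  have Idef: "\<And>s. s \<in> I \<longleftrightarrow> s \<in> S \<and> (\<exists>c\<in>C. F = s + c)"
    by (auto simp: I_def I_S_def cone_le_def)
  have sub: "\<phi> ` I \<subseteq> gaps C S"
  proof
    fix h assume "h \<in> \<phi> ` I"
    then obtain s c where s: "s \<in> S" "c \<in> C" "F = s + c" "h = F - s" using Idef \<phi>_def by blast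
    then have hc: "h = c" by simp
    show "h \<in> gaps C S"
    proof (rule ccontr)
      assume "h \<notin> gaps C S"
      then have "h \<in> S" using hc s by (auto simp: gaps_def)
      then have "F \<in> S" using Sadd s hc by auto
      then show False using Fg by (auto simp: gaps_def)
    qed
  qed
  have inj: "inj_on \<phi> I"
  proof (rule inj_onI)
    fix a b assume "a \<in> I" "b \<in> I" "\<phi> a = \<phi> b"
    then obtain c d where cd: "F = a + c" "F = b + d" "F - a = F - b" using Idef \<phi>_def by blast
    have "F - a = c" using cd(1) by simp
    moreover have "F - b = d" using cd(2) by simp
    ultimately have "c = d" using cd(3) by simp
    then show "a = b" using \<open>F = a + c\<close> \<open>F = b + d\<close> by (metis add_right_cancel)
  qed
  have cardI: "card I = card (\<phi> ` I)" using card_image[OF inj] by simp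
  have eq_iff: "2 * genus C S = gen_frob le C S \<longleftrightarrow> \<phi> ` I = gaps C S"
  proof
    assume "2 * genus C S = gen_frob le C S"
    then have "card (\<phi> ` I) = card (gaps C S)"
      using cardI by (simp add: gen_frob_def genus_def I_def F_def)
    then show "\<phi> ` I = gaps C S" using card_subset_eq[OF fin sub] by simp
  next
    assume "\<phi> ` I = gaps C S"
    then show "2 * genus C S = gen_frob le C S"
      using cardI by (simp add: gen_frob_def genus_def I_def F_def)
  qed
  have dir1: "\<phi> ` I = gaps C S" if sym: "symmetric_Csg le C S"
  proof
    show "\<phi> ` I \<subseteq> gaps C S" by (rule sub)
  next
    show "gaps C S \<subseteq> \<phi> ` I"
    proof
      fix h assume h: "h \<in> gaps C S"
      define X where "X = {x \<in> gaps C S. \<exists>s\<in>S. x = h + s}"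
      have finX: "finite X" using fin by (auto simp: X_def)
      have "h \<in> X" using h S0 by (auto simp: X_def intro: bexI[of _ 0])
      then obtain x where x: "x \<in> X" "\<forall>y\<in>X. le y x" using ex_max[OF mo finX] by blast
      then obtain s0 where s0: "s0 \<in> S" "x = h + s0" and xg: "x \<in> gaps C S" by (auto simp: X_def)
      have "x \<in> pseudo_frob C S"
      proof -
        have "x + s \<in> S" if "s \<in> S - {0}" for s
        proof (rule ccontr)
          assume "x + s \<notin> S"
          moreover have "x + s \<in> C" using cone_add[OF cone] xg SC that by (auto simp: gaps_def)
          moreover have "s0 + s \<in> S" using Sadd s0 that by auto
          moreover have "x + s = h + (s0 + s)" using s0 by (simp add: add.assoc)
          ultimately have "x + s \<in> X" by (auto simp: X_def gaps_def)
          then have "le (x + s) x" using x by blast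
          then have "x + s = x" using antis le0 by blast
          then have "s = 0" by (metis add_cancel_left_right)
          then show False using that by simp
        qed
        then show ?thesis using xg by (auto simp: pseudo_frob_def)
      qed
      then have "x = F" using sym by (auto simp: symmetric_Csg_def F_def)
      then have "F = s0 + h" using s0 by (simp add: add.commute)
      moreover have "h \<in> C" using h by (auto simp: gaps_def)
      ultimately have "s0 \<in> I" using Idef s0 by blast
      moreover have "h = \<phi> s0" using \<open>F = s0 + h\<close> by (simp add: \<phi>_def)
      ultimately show "h \<in> \<phi> ` I" by blast
    qed
  qed
  have dir2: "symmetric_Csg le C S" if im: "\<phi> ` I = gaps C S"
  proof -
    have "pseudo_frob C S = {F}"
    proof
      show "{F} \<subseteq> pseudo_frob C S" using FPF by simp
    next
      show "pseudo_frob C S \<subseteq> {F}"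
      proof
        fix h assume hp: "h \<in> pseudo_frob C S"
        then have hg: "h \<in> gaps C S" by (simp add: pseudo_frob_def)
        then obtain s c where s: "s \<in> S" "c \<in> C" "F = s + c" "h = F - s"
          using im Idef \<phi>_def by (metis imageE)
        then have hc: "h = c" by simp
        show "h \<in> {F}"
        proof (rule ccontr)
          assume "h \<notin> {F}"
          then have "s \<noteq> 0" using s hc by auto
          then have "h + s \<in> S" using hp s by (auto simp: pseudo_frob_def)
          then have "F \<in> S" using s hc by (simp add: add.commute)
          then show False using Fg by (auto simp: gaps_def)
        qed
      qed
    qed
    then show ?thesis by (simp add: symmetric_Csg_def F_def)
  qed
  show ?thesis using eq_iff dir1 dir2 by blast
qed

end
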